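(* Let $n\ge1$ and let $H=[a_{ij}]\in M_n(\mathbb N)$ be a symmetric positive semidefinite matrix of nonnegative integers such that $\alpha_i:=a_{ii}\ge\max_{j\ne i}a_{ij}$ for every $1\le i\le n$. Let $$\mathcal{J}_H=\left\langle x_l^{\alpha_l},\ x_i^{\alpha_i-a_{ij}}x_j^{\alpha_j-a_{ij}} : 1\le l\le n,\ 1\le i<j\le n\right\rangle\subseteq R_n.$$ Then $\dim_{\mathbb K}\left(R_n/\mathcal{J}_H\right)\ge\det H$.
   Context: $\mathbb K$ is a field and $R_n=\mathbb K[x_1,\ldots,x_n]$; $\mathbb N$ denotes the nonnegative integers. $\dim_{\mathbb K}$ is the dimension as a $\mathbb K$-vector space (finite since all $x_l^{\alpha_l}$ lie in $\mathcal{J}_H$). *)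

theory Defs
  imports "HOL-Library.Poly_Mapping" "HOL-Library.Extended_Nat" "Jordan_Normal_Form.Determinant"
begin

text \<open>Multivariate polynomials over a field 'k: finitely supported maps from monomials
  (exponent vectors, nat =>0 nat) to coefficients, with the convolution product
  of HOL-Library.Poly_Mapping.  Variable x_i (1 \<le> i \<le> n in the paper) is index i-1 here.\<close>

type_synonym 'k mpoly = "(nat \<Rightarrow>\<^sub>0 nat) \<Rightarrow>\<^sub>0 'k"

definition Rn :: "nat \<Rightarrow> 'k::field mpoly set" where
  "Rn n = {p. \<forall>m \<in> Poly_Mapping.keys p. Poly_Mapping.keys m \<subseteq> {..<n}}"

definition csmult :: "'k::field \<Rightarrow> 'k mpoly \<Rightarrow> 'k mpoly" where
  "csmult c p = Poly_Mapping.single 0 c * p"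

definition ideal_gen :: "'k::field mpoly set \<Rightarrow> 'k mpoly set \<Rightarrow> 'k mpoly set" where
  "ideal_gen R G = {p. \<exists>F f. finite F \<and> F \<subseteq> G \<and> (\<forall>g\<in>F. f g \<in> R) \<and> p = (\<Sum>g\<in>F. f g * g)}"

text \<open>A finite set S is K-linearly independent modulo J (i.e. its image in the quotient
  is linearly independent).\<close>
definition lin_indep_mod :: "'k::field mpoly set \<Rightarrow> 'k mpoly set \<Rightarrow> bool" where
  "lin_indep_mod J S \<longleftrightarrow> (\<forall>c. (\<Sum>s\<in>S. csmult (c s) s) \<in> J \<longrightarrow> (\<forall>s\<in>S. c s = 0))"

text \<open>dim_K (R/J): supremum of sizes of finite subsets of R linearly independent modulo J.\<close>
definition quot_dim :: "'k::field mpoly set \<Rightarrow> 'k mpoly set \<Rightarrow> enat" where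
  "quot_dim R J = (SUP S \<in> {S. finite S \<and> S \<subseteq> R \<and> lin_indep_mod J S}. enat (card S))"

definition mono :: "(nat \<Rightarrow>\<^sub>0 nat) \<Rightarrow> 'k::field mpoly" where
  "mono m = Poly_Mapping.single m 1"

definition JH_gens :: "nat \<Rightarrow> (nat \<Rightarrow> nat \<Rightarrow> nat) \<Rightarrow> 'k::field mpoly set" where
  "JH_gens n a =
     {mono (Poly_Mapping.single l (a l l)) | l. l < n} \<union>
     {mono (Poly_Mapping.single i (a i i - a i j) + Poly_Mapping.single j (a j j - a i j)) | i j.
        i < j \<and> j < n}"

definition psd :: "nat \<Rightarrow> (nat \<Rightarrow> nat \<Rightarrow> nat) \<Rightarrow> bool" where
  "psd n a \<longleftrightarrow> (\<forall>x :: nat \<Rightarrow> real. 0 \<le> (\<Sum>i<n. \<Sum>j<n. x i * real (a i j) * x j))"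

end

theory Submission
  imports Defs
begin


definition Bf :: "nat \<Rightarrow> (nat \<Rightarrow> nat \<Rightarrow> real) \<Rightarrow> (nat \<Rightarrow> real) \<Rightarrow> (nat \<Rightarrow> real) \<Rightarrow> real" where
  "Bf n k x y = (\<Sum>i<n. \<Sum>j<n. x i * k i j * y j)"

lemma Bf_alt: "Bf n k x y = (\<Sum>i<n. x i * (\<Sum>j<n. k i j * y j))"
  unfolding Bf_def by (simp add: sum_distrib_left mult.assoc)

lemma Bf_add_left: "Bf n k (\<lambda>p. x p + y p) z = Bf n k x z + Bf n k y z"
  unfolding Bf_def by (simp add: algebra_simps sum.distrib)
lemma Bf_add_right: "Bf n k z (\<lambda>p. x p + y p) = Bf n k z x + Bf n k z y"
  unfolding Bf_def by (simp add: algebra_simps sum.distrib)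
lemma Bf_smult_left: "Bf n k (\<lambda>p. u * x p) z = u * Bf n k x z"
  unfolding Bf_def by (simp add: algebra_simps sum_distrib_left)
lemma Bf_smult_right: "Bf n k z (\<lambda>p. u * x p) = u * Bf n k z x"
  unfolding Bf_def by (simp add: algebra_simps sum_distrib_left)
lemma Bf_sym: assumes "\<forall>i<n. \<forall>j<n. k i j = k j i" shows "Bf n k x y = Bf n k y x"
  unfolding Bf_def using assms
  apply (subst sum.swap)
  by (auto intro!: sum.cong simp: mult_ac)

lemma Bf_delta_left: "k' < n \<Longrightarrow> Bf n k (\<lambda>p. if p = k' then 1 else 0) y = (\<Sum>j<n. k k' j * y j)"
  unfolding Bf_alt by (simp add: if_distrib[where f="\<lambda>u. u * _"] cong: if_cong)

lemma psd_Bf: "psd n b \<Longrightarrow> 0 \<le> Bf n (\<lambda>i j. real (b i j)) x x"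
  by (simp add: psd_def Bf_def)

lemma psd_kernel:
  fixes b :: "nat \<Rightarrow> nat \<Rightarrow> nat"
  assumes sym: "\<forall>i<n. \<forall>j<n. b i j = b j i" and psd: "psd n b"
    and Q0: "Bf n (\<lambda>i j. real (b i j)) x x = 0" and kn: "k' < n"
  shows "(\<Sum>j<n. real (b k' j) * x j) = 0"
proof -
  let ?k = "\<lambda>i j. real (b i j)"
  let ?e = "\<lambda>p::nat. if p = k' then 1 else (0::real)"
  define g where "g = (\<Sum>j<n. real (b k' j) * x j)"
  define h where "h = real (b k' k')"
  have symk: "\<forall>i<n. \<forall>j<n. ?k i j = ?k j i" using sym by auto
  have ee: "Bf n ?k ?e ?e = h" using kn unfolding h_def
    by (simp add: Bf_delta_left if_distrib cong: if_cong)
  have ex: "Bf n ?k ?e x = g" using kn unfolding g_def by (simp add: Bf_delta_left)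
  have xe: "Bf n ?k x ?e = g" using ex Bf_sym[OF symk] by metis
  have key: "0 \<le> 2 * t * g + t * t * h" for t
  proof -
    have "0 \<le> Bf n ?k (\<lambda>p. x p + t * ?e p) (\<lambda>p. x p + t * ?e p)"
      by (rule psd_Bf[OF psd])
    also have "\<dots> = 2 * t * g + t * t * h"
      by (simp add: Bf_add_left Bf_add_right Bf_smult_left Bf_smult_right ee ex xe Q0 algebra_simps)
    finally show ?thesis .
  qed
  have h0: "h \<ge> 0" unfolding h_def by simp
  define s where "s = h + 1"
  have s0: "s > 0" using h0 unfolding s_def by simp
  have "0 \<le> 2 * (- g / s) * g + (- g / s) * (- g / s) * h" using key by blast
  hence "0 \<le> (2 * (- g / s) * g + (- g / s) * (- g / s) * h) * (s * s)" using s0 by simp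
  also have "\<dots> = 2 * ((- g / s) * s) * g * s + ((- g / s) * s) * ((- g / s) * s) * h" by (simp add: algebra_simps)
  also have "\<dots> = 2 * (- g) * g * s + (- g) * (- g) * h" using s0 by simp
  also have "\<dots> = - g * g * (h + 2)" unfolding s_def by (simp add: algebra_simps)
  finally have "g * g * (h + 2) \<le> 0" by simp
  moreover have "h + 2 > 0" using h0 by simp
  ultimately have "g * g \<le> 0" by (simp add: mult_le_0_iff)
  hence "g = 0" by (metis mult_eq_0_iff not_square_less_zero order_antisym_conv zero_le_square)
  thus ?thesis unfolding g_def .
qed

definition Mb :: "nat \<Rightarrow> (nat \<Rightarrow> nat \<Rightarrow> nat) \<Rightarrow> int mat" where
  "Mb n b = mat n n (\<lambda>(i, j). int (b i j))"

lemma Mb_carrier[simp]: "Mb n b \<in> carrier_mat n n" unfolding Mb_def by simp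

lemma det_zero_of_kernel:
  fixes v :: "nat \<Rightarrow> int"
  assumes k: "k < n" "v k \<noteq> 0" and ker: "\<forall>p<n. (\<Sum>q<n. int (b p q) * v q) = 0"
  shows "det (Mb n b) = 0"
proof -
  have "vec n v \<noteq> 0\<^sub>v n" using k by (metis index_vec index_zero_vec(1))
  moreover have "Mb n b *\<^sub>v vec n v = 0\<^sub>v n"
    using ker by (auto intro!: eq_vecI simp: Mb_def scalar_prod_def atLeast0LessThan)
  ultimately show ?thesis using det_0_iff_vec_prod_zero[OF Mb_carrier[of n b]] vec_carrier by blast
qed

lemma psd_kernel_int:
  fixes b :: "nat \<Rightarrow> nat \<Rightarrow> nat" and v :: "nat \<Rightarrow> int"
  assumes sym: "\<forall>i<n. \<forall>j<n. b i j = b j i" and psd: "psd n b"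
    and Q0: "Bf n (\<lambda>i j. real (b i j)) (\<lambda>p. real_of_int (v p)) (\<lambda>p. real_of_int (v p)) = 0"
    and k: "k < n" "v k \<noteq> 0"
  shows "det (Mb n b) = 0"
proof (rule det_zero_of_kernel[where k=k and n=n and v=v and b=b, OF k], intro allI impI)
  fix p assume p: "p < n"
  have "(\<Sum>j<n. real (b p j) * real_of_int (v j)) = 0" by (rule psd_kernel[OF sym psd Q0 p])
  hence "real_of_int (\<Sum>q<n. int (b p q) * v q) = 0" by simp
  thus "(\<Sum>q<n. int (b p q) * v q) = 0" by linarith
qed



lemma adj_col:
  assumes i: "i < n" and p: "p < n"
  shows "(\<Sum>q<n. int (b p q) * cofactor (Mb n b) i q) = (if p = i then det (Mb n b) else 0)"
proof -
  have "(Mb n b * adj_mat (Mb n b)) $$ (p, i) = (det (Mb n b) \<cdot>\<^sub>m 1\<^sub>m n) $$ (p, i)"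
    using adj_mat(2)[OF Mb_carrier] by simp
  moreover have "(Mb n b * adj_mat (Mb n b)) $$ (p, i) = (\<Sum>q<n. int (b p q) * cofactor (Mb n b) i q)"
    using i p adj_mat(1)[OF Mb_carrier[of n b]]
    by (auto simp: scalar_prod_def atLeast0LessThan Mb_def adj_mat_def intro!: sum.cong)
  moreover have "(det (Mb n b) \<cdot>\<^sub>m 1\<^sub>m n) $$ (p, i) = (if p = i then det (Mb n b) else 0)"
    using i p by simp
  ultimately show ?thesis by simp
qed

lemma adj_col_real:
  assumes i: "i < n" and p: "p < n"
  shows "(\<Sum>q<n. real (b p q) * real_of_int (cofactor (Mb n b) i q)) = (if p = i then real_of_int (det (Mb n b)) else 0)"
proof -
  have "real_of_int (\<Sum>q<n. int (b p q) * cofactor (Mb n b) i q) = real_of_int (if p = i then det (Mb n b) else 0)"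
    using adj_col[OF i p] by simp
  thus ?thesis by simp
qed

lemma Bf_adj_col:
  assumes i: "i < n" and hyp: "\<forall>p<n. (\<Sum>q<n. k p q * c q) = (if p = i then d else 0)"
  shows "Bf n k z c = z i * d"
proof -
  have "Bf n k z c = (\<Sum>p<n. z p * (if p = i then d else 0))" unfolding Bf_alt using hyp by simp
  also have "\<dots> = z i * d" using i by (simp add: if_distrib[where f="\<lambda>u. _ * u"] cong: if_cong)
  finally show ?thesis .
qed

lemma quad_identity:
  assumes i: "i < n" and symk: "\<forall>p<n. \<forall>q<n. k p q = k q p"
    and hyp: "\<forall>p<n. (\<Sum>q<n. k p q * c q) = (if p = i then d else 0)"
  shows "Bf n k (\<lambda>p. c i * z p + (- z i) * c p) (\<lambda>p. c i * z p + (- z i) * c p)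
     = (c i)^2 * Bf n k z z - c i * (z i)^2 * d"
proof -
  have zc: "Bf n k z c = z i * d" by (rule Bf_adj_col[OF i hyp])
  have cz: "Bf n k c z = z i * d" using zc Bf_sym[OF symk] by metis
  have cc: "Bf n k c c = c i * d" by (rule Bf_adj_col[OF i hyp])
  show ?thesis
    unfolding Bf_add_left Bf_add_right Bf_smult_left Bf_smult_right zc cz cc
    by (simp add: power2_eq_square algebra_simps)
qed

lemma Bf_diag_update:
  assumes i: "i < n"
  shows "Bf n (\<lambda>p q. k p q + (if p = i \<and> q = i then e else 0)) w w = Bf n k w w + e * w i * w i"
proof -
  have "Bf n (\<lambda>p q. k p q + (if p = i \<and> q = i then e else 0)) w w
     = Bf n k w w + (\<Sum>p<n. \<Sum>q<n. w p * (if p = i \<and> q = i then e else 0) * w q)"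
    unfolding Bf_def by (simp add: algebra_simps sum.distrib)
  also have "(\<Sum>p<n. \<Sum>q<n. w p * (if p = i \<and> q = i then e else 0) * w q) = e * w i * w i"
  proof -
    have "(\<Sum>p<n. \<Sum>q<n. w p * (if p = i \<and> q = i then e else 0) * w q) 
        = (\<Sum>p<n. if p = i then (\<Sum>q<n. if q = i then w i * e * w i else 0) else 0)"
    proof (intro sum.cong refl)
      fix p assume "p \<in> {..<n}"
      have "(\<Sum>q<n. w p * (if p = i \<and> q = i then e else 0) * w q) = (\<Sum>q<n. if q = i then (if p = i then w i * e * w i else 0) else 0)"
        by (intro sum.cong) auto
      also have "\<dots> = (if p = i then (\<Sum>q<n. if q = i then w i * e * w i else 0) else 0)" by auto
      finally show "(\<Sum>q<n. w p * (if p = i \<and> q = i then e else 0) * w q) = (if p = i then (\<Sum>q<n. if q = i then w i * e * w i else 0) else 0)" .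
    qed
    also have "\<dots> = e * w i * w i" using i by simp
    finally show ?thesis .
  qed
  finally show ?thesis .
qed

lemma mat_delete_eq:
  assumes "A \<in> carrier_mat n n" "B \<in> carrier_mat n n"
    and "\<forall>p<n. \<forall>q<n. p \<noteq> i \<longrightarrow> q \<noteq> j \<longrightarrow> A $$ (p, q) = B $$ (p, q)"
  shows "mat_delete A i j = mat_delete B i j"
  using assms unfolding mat_delete_def
  by (intro eq_matI) (auto simp: Suc_lessI)



definition bK :: "(nat \<Rightarrow> nat \<Rightarrow> nat) \<Rightarrow> nat \<Rightarrow> nat \<Rightarrow> nat \<Rightarrow> nat" where
  "bK b i = (\<lambda>p q. if p = i \<and> q = i then b i i - 1 else b p q)"
definition bI :: "(nat \<Rightarrow> nat \<Rightarrow> nat) \<Rightarrow> nat \<Rightarrow> nat \<Rightarrow> nat \<Rightarrow> nat" where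
  "bI b i = (\<lambda>p q. if p = i \<or> q = i then (if p = q then 1 else 0) else b p q)"

lemma cof_bK: assumes "i < n" "j < n" shows "cofactor (Mb n b) i j = cofactor (Mb n (bK b i)) i j"
  unfolding cofactor_def
  by (subst mat_delete_eq[of _ n]) (auto simp: Mb_def bK_def)

lemma cof_bI: assumes "i < n" shows "cofactor (Mb n (bI b i)) i i = cofactor (Mb n (bK b i)) i i"
  unfolding cofactor_def
  by (subst mat_delete_eq[of _ n]) (auto simp: Mb_def bK_def bI_def)

lemma det_bI: assumes i: "i < n" shows "det (Mb n (bI b i)) = cofactor (Mb n (bK b i)) i i"
proof -
  have "det (Mb n (bI b i)) = (\<Sum>j<n. Mb n (bI b i) $$ (i,j) * cofactor (Mb n (bI b i)) i j)"
    by (rule laplace_expansion_row[OF Mb_carrier i])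
  also have "\<dots> = (\<Sum>j<n. if j = i then cofactor (Mb n (bI b i)) i i else 0)"
    using i by (intro sum.cong) (auto simp: Mb_def bI_def)
  also have "\<dots> = cofactor (Mb n (bI b i)) i i" using i by simp
  finally show ?thesis using cof_bI[OF i] by simp
qed

lemma det_split: assumes i: "i < n" and bii: "1 \<le> b i i"
  shows "det (Mb n b) = det (Mb n (bK b i)) + det (Mb n (bI b i))"
proof -
  have "det (Mb n b) = (\<Sum>j<n. Mb n b $$ (i,j) * cofactor (Mb n b) i j)"
    by (rule laplace_expansion_row[OF Mb_carrier i])
  also have "\<dots> = (\<Sum>j<n. Mb n (bK b i) $$ (i,j) * cofactor (Mb n (bK b i)) i j + 
        (if j = i then cofactor (Mb n (bK b i)) i i else 0))"
  proof (intro sum.cong refl)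
    fix j assume "j \<in> {..<n}"
    hence j: "j < n" by simp
    have c: "cofactor (Mb n b) i j = cofactor (Mb n (bK b i)) i j" by (rule cof_bK[OF i j])
    have e1: "Mb n b $$ (i,j) = int (b i j)" and e2: "Mb n (bK b i) $$ (i,j) = int (bK b i i j)"
      using i j by (simp_all add: Mb_def)
    show "Mb n b $$ (i,j) * cofactor (Mb n b) i j = Mb n (bK b i) $$ (i,j) * cofactor (Mb n (bK b i)) i j + 
        (if j = i then cofactor (Mb n (bK b i)) i i else 0)"
      unfolding c e1 e2 using bii by (cases "j = i") (simp_all add: bK_def of_nat_diff algebra_simps)
  qed
  also have "\<dots> = det (Mb n (bK b i)) + cofactor (Mb n (bK b i)) i i"
    using i by (simp add: sum.distrib laplace_expansion_row[OF Mb_carrier i])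
  finally show ?thesis using det_bI[OF i] by simp
qed

definition Y :: "nat \<Rightarrow> (nat \<Rightarrow> nat \<Rightarrow> nat) \<Rightarrow> (nat \<Rightarrow> nat) set" where
  "Y n b = {y. (\<forall>p. n \<le> p \<longrightarrow> y p = 0) \<and> (\<forall>p<n. 1 \<le> y p \<and> y p \<le> b p p) \<and>
     (\<forall>p<n. \<forall>q<n. p \<noteq> q \<longrightarrow> b p q < max (y p) (y q))}"

lemma finite_Y: "finite (Y n b)"
proof -
  let ?B = "\<Sum>p<n. b p p"
  have "Y n b \<subseteq> {f. \<forall>x. (x \<in> {..<n} \<longrightarrow> f x \<in> {..?B}) \<and> (x \<notin> {..<n} \<longrightarrow> f x = 0)}"
  proof -
    have "\<forall>x<n. b x x \<le> ?B" by (auto intro: member_le_sum)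
    thus ?thesis unfolding Y_def by (auto intro: le_trans)
  qed
  thus ?thesis by (rule finite_subset) (intro finite_set_of_finite_funs; simp)
qed

lemma card_split:
  assumes i: "i < n" and bii: "1 \<le> b i i" and nt: "\<forall>j<n. j \<noteq> i \<longrightarrow> b i j < b i i"
    and sym: "\<forall>p<n. \<forall>q<n. b p q = b q p"
  shows "card (Y n b) = card (Y n (bK b i)) + card (Y n (bI b i))"
proof -
  let ?f = "\<lambda>y. y(i := b i i)"
  have eq: "Y n b = Y n (bK b i) \<union> ?f ` Y n (bI b i)"
  proof (intro equalityI subsetI)
    fix y assume y: "y \<in> Y n b"
    show "y \<in> Y n (bK b i) \<union> ?f ` Y n (bI b i)"
    proof (cases "y i = b i i")
      case True
      have "y(i := 1) \<in> Y n (bI b i)" using y i unfolding Y_def bI_def by auto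
      moreover have "y = ?f (y(i := 1))" using True by auto
      ultimately show ?thesis by blast
    next
      case False
      hence "y \<in> Y n (bK b i)" using y i unfolding Y_def bK_def by auto
      thus ?thesis by blast
    qed
  next
    fix y assume "y \<in> Y n (bK b i) \<union> ?f ` Y n (bI b i)"
    then consider "y \<in> Y n (bK b i)" | z where "z \<in> Y n (bI b i)" "y = ?f z" by blast
    thus "y \<in> Y n b"
    proof cases
      case 1 thus ?thesis using i unfolding Y_def bK_def
        by (auto split: if_splits)
    next
      case 2
      show ?thesis unfolding Y_def
      proof (intro CollectI conjI allI impI)
        fix p assume "n \<le> p" thus "y p = 0" using 2 i unfolding Y_def by auto
      next
        fix p assume "p < n" thus "1 \<le> y p" using 2 i bii unfolding Y_def bI_def by auto
      next
        fix p assume "p < n" thus "y p \<le> b p p" using 2 i bii unfolding Y_def bI_def by auto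
      next
        fix p q assume pq: "p < n" "q < n" "p \<noteq> q"
        show "b p q < max (y p) (y q)"
        proof (cases "p = i \<or> q = i")
          case True
          thus ?thesis using nt sym pq 2 by (auto simp: less_max_iff_disj)
        next
          case False
          have "bI b i p q < max (z p) (z q)" using 2(1) pq unfolding Y_def by blast
          thus ?thesis using False 2(2) by (simp add: bI_def)
        qed
      qed
    qed
  qed
  have disj: "Y n (bK b i) \<inter> ?f ` Y n (bI b i) = {}"
    using i bii unfolding Y_def bK_def by auto
  have inj: "inj_on ?f (Y n (bI b i))"
  proof (rule inj_onI)
    fix y z assume yz: "y \<in> Y n (bI b i)" "z \<in> Y n (bI b i)" "?f y = ?f z"
    have "y i = 1" "z i = 1" using yz i unfolding Y_def bI_def by auto
    thus "y = z" using yz(3) by (metis fun_upd_triv fun_upd_upd)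
  qed
  show ?thesis unfolding eq
    by (subst card_Un_disjoint[OF finite_Y _ disj]) (auto simp: card_image[OF inj] finite_Y)
qed



definition symc :: "nat \<Rightarrow> (nat \<Rightarrow> nat \<Rightarrow> nat) \<Rightarrow> bool" where
  "symc n b \<longleftrightarrow> (\<forall>i<n. \<forall>j<n. b i j = b j i)"
definition diagc :: "nat \<Rightarrow> (nat \<Rightarrow> nat \<Rightarrow> nat) \<Rightarrow> bool" where
  "diagc n b \<longleftrightarrow> (\<forall>i<n. \<forall>j<n. j \<noteq> i \<longrightarrow> b i j \<le> b i i)"
definition triv :: "nat \<Rightarrow> (nat \<Rightarrow> nat \<Rightarrow> nat) \<Rightarrow> nat \<Rightarrow> bool" where
  "triv n b i \<longleftrightarrow> b i i = 1 \<and> (\<forall>j<n. j \<noteq> i \<longrightarrow> b i j = 0)"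
definition meas :: "nat \<Rightarrow> (nat \<Rightarrow> nat \<Rightarrow> nat) \<Rightarrow> nat" where
  "meas n b = card {i. i < n \<and> \<not> triv n b i} + (\<Sum>i<n. b i i)"

lemma symc_bK: "symc n b \<Longrightarrow> symc n (bK b i)" unfolding symc_def bK_def by auto
lemma symc_bI: "symc n b \<Longrightarrow> symc n (bI b i)" unfolding symc_def bI_def by auto
lemma diagc_bK: "diagc n b \<Longrightarrow> \<forall>j<n. j \<noteq> i \<longrightarrow> b i j < b i i \<Longrightarrow> diagc n (bK b i)"
  unfolding diagc_def bK_def by auto
lemma diagc_bI: "diagc n b \<Longrightarrow> diagc n (bI b i)" unfolding diagc_def bI_def by auto

lemma double_delta: "i < (n::nat) \<Longrightarrow> (\<Sum>p<n. \<Sum>q<n. if p = i \<and> q = i then c else 0) = (c :: real)"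
proof -
  assume i: "i < n"
  have "(\<Sum>p<n. \<Sum>q<n. if p = i \<and> q = i then c else 0) = (\<Sum>p<n. if p = i then (\<Sum>q<n. if q = i then c else 0) else 0)"
    by (intro sum.cong) auto
  also have "\<dots> = c" using i by simp
  finally show ?thesis .
qed

lemma psd_bI: assumes i: "i < n" and psd: "psd n b" shows "psd n (bI b i)"
  unfolding psd_def
proof
  fix x :: "nat \<Rightarrow> real"
  let ?x = "x(i := 0)"
  have "(\<Sum>p<n. \<Sum>q<n. x p * real (bI b i p q) * x q)
     = (\<Sum>p<n. \<Sum>q<n. ?x p * real (b p q) * ?x q + (if p = i \<and> q = i then x i * x i else 0))"
    by (intro sum.cong refl) (auto simp: bI_def)
  also have "\<dots> = Bf n (\<lambda>p q. real (b p q)) ?x ?x + x i * x i"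
    unfolding Bf_def by (simp add: sum.distrib double_delta[OF i])
  finally show "0 \<le> (\<Sum>p<n. \<Sum>q<n. x p * real (bI b i p q) * x q)"
    using psd_Bf[OF psd, of ?x] by simp
qed

lemma meas_bK: assumes i: "i < n" and bii: "1 \<le> b i i" and nt: "\<not> triv n b i" shows "meas n (bK b i) < meas n b"
proof -
  have sub: "{j. j < n \<and> \<not> triv n (bK b i) j} \<subseteq> {j. j < n \<and> \<not> triv n b j}"
    using nt unfolding triv_def bK_def by auto
  have c: "card {j. j < n \<and> \<not> triv n (bK b i) j} \<le> card {j. j < n \<and> \<not> triv n b j}"
    by (rule card_mono[OF _ sub]) simp
  have "(\<Sum>j<n. bK b i j j) < (\<Sum>j<n. b j j)"
  proof -
    have "(\<Sum>j<n. b j j) = (\<Sum>j<n. bK b i j j + (if j = i then 1 else 0))"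
      using bii by (intro sum.cong) (auto simp: bK_def)
    also have "\<dots> = (\<Sum>j<n. bK b i j j) + 1" using i by (simp add: sum.distrib)
    finally show ?thesis by simp
  qed
  thus ?thesis using c unfolding meas_def by simp
qed

lemma meas_bI: assumes i: "i < n" and bii: "1 \<le> b i i" and nt: "\<not> triv n b i"
  shows "meas n (bI b i) < meas n b"
proof -
  have sub: "{j. j < n \<and> \<not> triv n (bI b i) j} \<subset> {j. j < n \<and> \<not> triv n b j}"
  proof
    show "{j. j < n \<and> \<not> triv n (bI b i) j} \<subseteq> {j. j < n \<and> \<not> triv n b j}"
      unfolding triv_def bI_def by auto
    have "i \<notin> {j. j < n \<and> \<not> triv n (bI b i) j}" unfolding triv_def bI_def by auto
    moreover have "i \<in> {j. j < n \<and> \<not> triv n b j}" using i nt by auto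
    ultimately show "{j. j < n \<and> \<not> triv n (bI b i) j} \<noteq> {j. j < n \<and> \<not> triv n b j}" by blast
  qed
  have c: "card {j. j < n \<and> \<not> triv n (bI b i) j} < card {j. j < n \<and> \<not> triv n b j}"
    by (rule psubset_card_mono[OF _ sub]) simp
  have "(\<Sum>j<n. bI b i j j) \<le> (\<Sum>j<n. b j j)"
    using bii by (intro sum_mono) (auto simp: bI_def)
  thus ?thesis using c unfolding meas_def by simp
qed



lemma psd_iff_Bf: "psd n b \<longleftrightarrow> (\<forall>x. 0 \<le> Bf n (\<lambda>i j. real (b i j)) x x)"
  by (simp add: psd_def Bf_def)

lemma Bf_delta_both: "a < n \<Longrightarrow> c < n \<Longrightarrow>
  Bf n k (\<lambda>p. if p = a then 1 else 0) (\<lambda>p. if p = c then 1 else 0) = k a c"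
  by (simp add: Bf_delta_left if_distrib[where f="\<lambda>u. _ * u"] cong: if_cong)

lemma step:
  fixes n :: nat and b :: "nat \<Rightarrow> nat \<Rightarrow> nat"
  assumes IH: "\<And>b'. meas n b' < meas n b \<Longrightarrow> symc n b' \<Longrightarrow> psd n b' \<Longrightarrow> diagc n b' \<Longrightarrow>
      0 \<le> det (Mb n b') \<and> det (Mb n b') \<le> int (card (Y n b'))"
    and sym: "symc n b" and psd: "psd n b" and diag: "diagc n b"
  shows "0 \<le> det (Mb n b) \<and> det (Mb n b) \<le> int (card (Y n b))"
proof -
  have symr: "\<forall>p<n. \<forall>q<n. b p q = b q p" using sym unfolding symc_def by blast
  show ?thesis
  proof (cases "\<exists>i<n. \<not> triv n b i \<and> 1 \<le> b i i \<and> (\<forall>j<n. j \<noteq> i \<longrightarrow> b i j < b i i)")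
    case True
    then obtain i where i: "i < n" and nt: "\<not> triv n b i" and bii: "1 \<le> b i i"
      and ntt: "\<forall>j<n. j \<noteq> i \<longrightarrow> b i j < b i i" by blast
    define D where "D = det (Mb n (bI b i))"
    define dK where "dK = det (Mb n (bK b i))"
    have split: "det (Mb n b) = dK + D" using det_split[where i=i and n=n and b=b, OF i bii] unfolding D_def dK_def by simp
    have Dcof: "D = cofactor (Mb n (bK b i)) i i" using det_bI[where i=i and n=n and b=b, OF i] unfolding D_def by simp
    have IHI: "0 \<le> D \<and> D \<le> int (card (Y n (bI b i)))" unfolding D_def
      by (rule IH[OF meas_bI[where i=i and n=n and b=b, OF i bii nt] symc_bI[OF sym] psd_bI[where i=i and n=n and b=b, OF i psd] diagc_bI[OF diag]])
    have card: "card (Y n b) = card (Y n (bK b i)) + card (Y n (bI b i))"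
      by (rule card_split[where i=i and n=n and b=b, OF i bii ntt symr])
    show ?thesis
    proof (cases "D = 0")
      case True
      obtain v where v: "v \<in> carrier_vec n" "v \<noteq> 0\<^sub>v n" "Mb n (bI b i) *\<^sub>v v = 0\<^sub>v n"
        using True det_0_iff_vec_prod_zero[OF Mb_carrier[of n "bI b i"]] unfolding D_def by blast
      define x where "x = (\<lambda>p. v $ p)"
      have rowI: "(\<Sum>q<n. int (bI b i p q) * x q) = 0" if p: "p < n" for p
      proof -
        have "(Mb n (bI b i) *\<^sub>v v) $ p = 0" using v(3) p by simp
        thus ?thesis using p v(1) by (simp add: Mb_def scalar_prod_def atLeast0LessThan x_def)
      qed
      have xi: "x i = 0"
      proof -
        have "(\<Sum>q<n. int (bI b i i q) * x q) = (\<Sum>q<n. if q = i then x q else 0)"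
          by (intro sum.cong) (auto simp: bI_def)
        thus ?thesis using rowI[OF i] i by simp
      qed
      have rowb: "(\<Sum>q<n. int (b p q) * x q) = 0" if p: "p < n" "p \<noteq> i" for p
      proof -
        have "(\<Sum>q<n. int (b p q) * x q) = (\<Sum>q<n. int (bI b i p q) * x q)"
          using xi p by (intro sum.cong) (auto simp: bI_def)
        thus ?thesis using rowI[OF p(1)] by simp
      qed
      have Q0: "Bf n (\<lambda>p q. real (b p q)) (\<lambda>p. real_of_int (x p)) (\<lambda>p. real_of_int (x p)) = 0"
      proof -
        have "Bf n (\<lambda>p q. real (b p q)) (\<lambda>p. real_of_int (x p)) (\<lambda>p. real_of_int (x p))
            = (\<Sum>p<n. real_of_int (x p) * real_of_int (\<Sum>q<n. int (b p q) * x q))"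
          unfolding Bf_alt by simp
        also have "\<dots> = 0"
        proof (intro sum.neutral ballI)
          fix p assume p: "p \<in> {..<n}"
          show "real_of_int (x p) * real_of_int (\<Sum>q<n. int (b p q) * x q) = 0"
          proof (cases "p = i")
            case True thus ?thesis using xi by simp
          next
            case False
            have "(\<Sum>q<n. int (b p q) * x q) = 0" using rowb False p by blast
            thus ?thesis by (metis mult_zero_right of_int_0)
          qed
        qed
        finally show ?thesis .
      qed
      obtain k where k: "k < n" "x k \<noteq> 0"
      proof -
        have "\<exists>k<n. v $ k \<noteq> 0"
        proof (rule ccontr)
          assume "\<not> (\<exists>k<n. v $ k \<noteq> 0)"
          hence "v = 0\<^sub>v n" using v(1) by (intro eq_vecI) auto
          thus False using v(2) by simp
        qed
        thus ?thesis using that unfolding x_def by blast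
      qed
      have "det (Mb n b) = 0" by (rule psd_kernel_int[OF symr psd Q0 k])
      thus ?thesis by simp
    next
      case False
      hence Dpos: "D > 0" using IHI by simp
      define c where "c = (\<lambda>q. real_of_int (cofactor (Mb n b) i q))"
      have hypb: "\<forall>p<n. (\<Sum>q<n. real (b p q) * c q) = (if p = i then real_of_int (det (Mb n b)) else 0)"
        using adj_col_real[where i=i and n=n and b=b, OF i] unfolding c_def by blast
      have ci: "c i = real_of_int D" unfolding c_def Dcof using cof_bK[where i=i and n=n and b=b and j=i, OF i i] by simp
      have "Bf n (\<lambda>p q. real (b p q)) c c = c i * real_of_int (det (Mb n b))"
        by (rule Bf_adj_col[OF i hypb])
      hence "0 \<le> real_of_int D * real_of_int (det (Mb n b))" using psd_Bf[OF psd, of c] ci by simp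
      hence det0: "0 \<le> det (Mb n b)" using Dpos by (simp add: zero_le_mult_iff)
      have "det (Mb n b) \<le> int (card (Y n b))"
      proof (cases "dK \<le> 0")
        case True
        thus ?thesis using split IHI card by simp
      next
        case False
        hence dKpos: "dK > 0" by simp
        let ?k = "\<lambda>p q. real (bK b i p q)"
        define cK where "cK = (\<lambda>q. real_of_int (cofactor (Mb n (bK b i)) i q))"
        have hypK: "\<forall>p<n. (\<Sum>q<n. ?k p q * cK q) = (if p = i then real_of_int dK else 0)"
          using adj_col_real[where i=i and n=n and b="bK b i", OF i] unfolding cK_def dK_def by blast
        have symk: "\<forall>p<n. \<forall>q<n. ?k p q = ?k q p" using symc_bK[OF sym] unfolding symc_def by auto
        have cKi: "cK i = real_of_int D" unfolding cK_def Dcof by simp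
        have bk: "(\<lambda>p q. real (b p q)) = (\<lambda>p q. ?k p q + (if p = i \<and> q = i then 1 else 0))"
          using bii by (auto simp: bK_def fun_eq_iff of_nat_diff)
        have psdK: "psd n (bK b i)" unfolding psd_iff_Bf
        proof
          fix z :: "nat \<Rightarrow> real"
          define w where "w = (\<lambda>p. cK i * z p + (- z i) * cK p)"
          have id: "Bf n ?k w w = (cK i)^2 * Bf n ?k z z - cK i * (z i)^2 * real_of_int dK"
            unfolding w_def by (rule quad_identity[OF i symk hypK])
          have wi: "w i = 0" unfolding w_def by simp
          have "Bf n (\<lambda>p q. real (b p q)) w w = Bf n ?k w w + 1 * w i * w i"
            unfolding bk by (rule Bf_diag_update[OF i])
          hence "Bf n ?k w w \<ge> 0" using psd_Bf[OF psd, of w] wi by simp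
          hence "(cK i)^2 * Bf n ?k z z \<ge> cK i * (z i)^2 * real_of_int dK" using id by simp
          moreover have "cK i * (z i)^2 * real_of_int dK \<ge> 0" using cKi Dpos dKpos by simp
          ultimately have "(cK i)^2 * Bf n ?k z z \<ge> 0" by linarith
          moreover have "(cK i)^2 > 0" using cKi Dpos by simp
          ultimately show "0 \<le> Bf n ?k z z" by (simp add: zero_le_mult_iff)
        qed
        have IHK: "0 \<le> dK \<and> dK \<le> int (card (Y n (bK b i)))" unfolding dK_def
          by (rule IH[OF meas_bK[where i=i and n=n and b=b, OF i bii nt] symc_bK[OF sym] psdK diagc_bK[where i=i and n=n and b=b, OF diag ntt]])
        thus ?thesis using split IHI card by simp
      qed
      with det0 show ?thesis by simp
    qed
  next
    case False
    hence F: "\<forall>i<n. \<not> triv n b i \<longrightarrow> \<not> (1 \<le> b i i \<and> (\<forall>j<n. j \<noteq> i \<longrightarrow> b i j < b i i))" by blast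
    show ?thesis
    proof (cases "\<forall>i<n. triv n b i")
      case True
      have M: "Mb n b = 1\<^sub>m n" using True by (auto intro!: eq_matI simp: Mb_def triv_def)
      let ?y0 = "\<lambda>p. if p < n then 1 else (0::nat)"
      have "Y n b = {?y0}"
      proof
        show "Y n b \<subseteq> {?y0}"
        proof
          fix y assume y: "y \<in> Y n b"
          have "y = ?y0"
          proof
            fix p show "y p = ?y0 p" using y True unfolding Y_def triv_def
              by (cases "p < n") (auto simp: le_antisym)
          qed
          thus "y \<in> {?y0}" by simp
        qed
        show "{?y0} \<subseteq> Y n b" using True unfolding Y_def triv_def by auto
      qed
      thus ?thesis using M by simp
    next
      case False
      then obtain i0 where i0: "i0 < n" "\<not> triv n b i0" by blast
      define N where "N = {i. i < n \<and> \<not> triv n b i}"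
      have finN: "finite N" unfolding N_def by simp
      have neN: "N \<noteq> {}" using i0 unfolding N_def by auto
      define m where "m = Max ((\<lambda>j. b j j) ` N)"
      have "m \<in> (\<lambda>j. b j j) ` N" unfolding m_def using finN neN by (intro Max_in) auto
      then obtain i where iN: "i \<in> N" and im: "b i i = m" by auto
      have imax: "\<forall>j\<in>N. b j j \<le> b i i" unfolding im m_def using finN by auto
      have i: "i < n" and nti: "\<not> triv n b i" using iN unfolding N_def by auto
      have "det (Mb n b) = 0"
      proof (cases "b i i = 0")
        case True
        define v where "v = (\<lambda>p. if p = i then (1::int) else 0)"
        have vv: "(\<lambda>p. real_of_int (v p)) = (\<lambda>p. if p = i then 1 else 0)" unfolding v_def by auto
        have Q0: "Bf n (\<lambda>p q. real (b p q)) (\<lambda>p. real_of_int (v p)) (\<lambda>p. real_of_int (v p)) = 0"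
          unfolding vv using Bf_delta_both[OF i i] True by simp
        show ?thesis by (rule psd_kernel_int[OF symr psd Q0, of i]) (simp_all add: i v_def)
      next
        case False
        then obtain j where j: "j < n" "j \<noteq> i" "b i j \<ge> b i i" using F i nti by force
        have bij: "b i j = b i i" using diag j i unfolding diagc_def by (metis le_antisym)
        have "\<not> triv n b j"
        proof
          assume "triv n b j"
          hence "b j i = 0" using i j unfolding triv_def by auto
          thus False using bij False symr i j by auto
        qed
        hence "b j j \<le> b i i" using imax j unfolding N_def by auto
        moreover have "b j i \<le> b j j" using diag i j unfolding diagc_def by auto
        ultimately have bjj: "b j j = b i i" and bji: "b j i = b i i" using bij symr i j by auto
        define v where "v = (\<lambda>p. (if p = i then (1::int) else 0) - (if p = j then 1 else 0))"
        have vv: "(\<lambda>p. real_of_int (v p)) = (\<lambda>p. (if p = i then 1 else 0) + (- 1) * (if p = j then 1 else 0))"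
          unfolding v_def by auto
        have Q0: "Bf n (\<lambda>p q. real (b p q)) (\<lambda>p. real_of_int (v p)) (\<lambda>p. real_of_int (v p)) = 0"
          unfolding vv Bf_add_left Bf_add_right Bf_smult_left Bf_smult_right
          using Bf_delta_both[OF i i] Bf_delta_both[OF i j(1)] Bf_delta_both[OF j(1) i] Bf_delta_both[OF j(1) j(1)]
            bij bjj bji by simp
        show ?thesis by (rule psd_kernel_int[OF symr psd Q0, of i]) (use j in \<open>simp_all add: i v_def\<close>)
      qed
      thus ?thesis by simp
    qed
  qed
qed

lemma main_ineq:
  fixes n :: nat and b :: "nat \<Rightarrow> nat \<Rightarrow> nat"
  assumes "symc n b" "psd n b" "diagc n b"
  shows "0 \<le> det (Mb n b) \<and> det (Mb n b) \<le> int (card (Y n b))"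
proof -
  have "\<forall>b. meas n b = N \<longrightarrow> symc n b \<longrightarrow> psd n b \<longrightarrow> diagc n b \<longrightarrow>
      0 \<le> det (Mb n b) \<and> det (Mb n b) \<le> int (card (Y n b))" for N
  proof (induction N rule: less_induct)
    case (less N)
    show ?case
    proof (intro allI impI)
      fix b assume b: "meas n b = N" "symc n b" "psd n b" "diagc n b"
      show "0 \<le> det (Mb n b) \<and> det (Mb n b) \<le> int (card (Y n b))"
        by (rule step[OF _ b(2-4)]) (use less b(1) in blast)
    qed
  qed
  thus ?thesis using assms by blast
qed



definition ex :: "nat \<Rightarrow> (nat \<Rightarrow> nat \<Rightarrow> nat) \<Rightarrow> (nat \<Rightarrow> nat) \<Rightarrow> (nat \<Rightarrow>\<^sub>0 nat)" where
  "ex n a y = Abs_poly_mapping (\<lambda>p. if p < n then a p p - y p else 0)"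

lemma lookup_ex: "Poly_Mapping.lookup (ex n a y) = (\<lambda>p. if p < n then a p p - y p else 0)"
proof -
  have "finite {p. (if p < n then a p p - y p else 0) \<noteq> 0}"
    by (rule finite_subset[of _ "{..<n}"]) auto
  thus ?thesis unfolding ex_def by (rule lookup_Abs_poly_mapping)
qed

lemma mono_inj: "(mono m :: 'k::field mpoly) = mono m' \<longleftrightarrow> m = m'"
  unfolding mono_def by (metis lookup_single_eq lookup_single_not_eq one_neq_zero)

lemma keys_mono: "Poly_Mapping.keys (mono m :: 'k::field mpoly) = {m}" unfolding mono_def by simp

lemma lookup_csmult_mono: "Poly_Mapping.lookup (csmult c (mono m' :: 'k::field mpoly)) m0 = (if m' = m0 then c else 0)"
  unfolding csmult_def mono_def mult_single by (simp add: lookup_single when_def)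

lemma ex_inj: "inj_on (ex n a) (Y n a)"
proof (rule inj_onI)
  fix y y' assume y: "y \<in> Y n a" "y' \<in> Y n a" "ex n a y = ex n a y'"
  hence l: "Poly_Mapping.lookup (ex n a y) = Poly_Mapping.lookup (ex n a y')" by simp
  show "y = y'"
  proof
    fix p show "y p = y' p"
    proof (cases "p < n")
      case True
      have "Poly_Mapping.lookup (ex n a y) p = Poly_Mapping.lookup (ex n a y') p" using l by simp
      hence "a p p - y p = a p p - y' p" using True unfolding lookup_ex by simp
      moreover have "y p \<le> a p p" "y' p \<le> a p p" using y True unfolding Y_def by auto
      ultimately show ?thesis by simp
    next
      case False thus ?thesis using y unfolding Y_def by auto
    qed
  qed
qed

lemma not_div:
  assumes y: "y \<in> Y n a" and sym: "\<forall>i<n. \<forall>j<n. a i j = a j i"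
    and diag: "\<forall>i<n. \<forall>j<n. j \<noteq> i \<longrightarrow> a i j \<le> a i i"
    and g: "g \<in> (JH_gens n a :: 'k::field mpoly set)"
  shows "\<exists>e. g = mono e \<and> (\<forall>k. ex n a y \<noteq> k + e)"
  using g unfolding JH_gens_def
proof (elim UnE CollectE exE conjE)
  fix l assume g: "g = mono (Poly_Mapping.single l (a l l))" and l: "l < n"
  show ?thesis
  proof (rule exI[where x="Poly_Mapping.single l (a l l)"], intro conjI allI)
    show "g = mono (Poly_Mapping.single l (a l l))" by (rule g)
  next
    fix k show "ex n a y \<noteq> k + Poly_Mapping.single l (a l l)"
    proof
      assume "ex n a y = k + Poly_Mapping.single l (a l l)"
      hence "Poly_Mapping.lookup (ex n a y) l = Poly_Mapping.lookup k l + a l l" by (simp add: lookup_add)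
      moreover have "1 \<le> y l" "y l \<le> a l l" using y l unfolding Y_def by auto
      ultimately show False using l unfolding lookup_ex by simp
    qed
  qed
next
  fix i j assume g: "g = mono (Poly_Mapping.single i (a i i - a i j) + Poly_Mapping.single j (a j j - a i j))"
    and ij: "i < j" "j < n"
  show ?thesis
  proof (rule exI[where x="Poly_Mapping.single i (a i i - a i j) + Poly_Mapping.single j (a j j - a i j)"], intro conjI allI)
    show "g = mono (Poly_Mapping.single i (a i i - a i j) + Poly_Mapping.single j (a j j - a i j))" by (rule g)
  next
    fix k show "ex n a y \<noteq> k + (Poly_Mapping.single i (a i i - a i j) + Poly_Mapping.single j (a j j - a i j))"
    proof
      assume h: "ex n a y = k + (Poly_Mapping.single i (a i i - a i j) + Poly_Mapping.single j (a j j - a i j))"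
      have i: "i < n" and jn: "j < n" and ne: "i \<noteq> j" "j \<noteq> i" using ij by simp_all
      have Yc: "\<forall>p<n. 1 \<le> y p \<and> y p \<le> a p p" "\<forall>p<n. \<forall>q<n. p \<noteq> q \<longrightarrow> a p q < max (y p) (y q)"
        using y unfolding Y_def by blast+
      have "Poly_Mapping.lookup (ex n a y) i = Poly_Mapping.lookup k i + (a i i - a i j)"
        unfolding h using ne by (simp add: lookup_add lookup_single_not_eq)
      hence hi: "a i i - y i \<ge> a i i - a i j" using i unfolding lookup_ex by simp
      have "Poly_Mapping.lookup (ex n a y) j = Poly_Mapping.lookup k j + (a j j - a i j)"
        unfolding h using ne by (simp add: lookup_add lookup_single_not_eq)
      hence hj: "a j j - y j \<ge> a j j - a i j" using jn unfolding lookup_ex by simp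
      have yb: "y i \<le> a i i" "y j \<le> a j j" using Yc(1) i jn by blast+
      have d: "a i j \<le> a i i" "a j i \<le> a j j" using diag i jn ne by blast+
      have s: "a j i = a i j" using sym i jn by blast
      have m: "a i j < max (y i) (y j)" using Yc(2) i jn ne by blast
      have "y i \<le> a i j" using hi yb d by linarith
      moreover have "y j \<le> a i j" using hj yb d s by linarith
      moreover note m
      ultimately show False by simp
    qed
  qed
qed

lemma lin_indep:
  assumes sym: "\<forall>i<n. \<forall>j<n. a i j = a j i"
    and diag: "\<forall>i<n. \<forall>j<n. j \<noteq> i \<longrightarrow> a i j \<le> a i i"
  shows "lin_indep_mod (ideal_gen (Rn n) (JH_gens n a :: 'k::field mpoly set)) ((\<lambda>y. mono (ex n a y)) ` Y n a)"
  unfolding lin_indep_mod_def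
proof (intro allI impI ballI)
  let ?S = "(\<lambda>y. mono (ex n a y) :: 'k mpoly) ` Y n a"
  fix c s assume h: "(\<Sum>s\<in>?S. csmult (c s) s) \<in> ideal_gen (Rn n) (JH_gens n a)" and s: "s \<in> ?S"
  then obtain y where y: "y \<in> Y n a" and sy: "s = mono (ex n a y)" by blast
  obtain F f where F: "finite F" "F \<subseteq> JH_gens n a" and eq: "(\<Sum>s\<in>?S. csmult (c s) s) = (\<Sum>g\<in>F. f g * g)"
    using h unfolding ideal_gen_def by blast
  have "Poly_Mapping.lookup (\<Sum>s\<in>?S. csmult (c s) s) (ex n a y) = (\<Sum>s'\<in>?S. if s' = s then c s' else 0)"
    unfolding lookup_sum
  proof (intro sum.cong refl)
    fix s' assume "s' \<in> ?S"
    then obtain y' where s': "s' = mono (ex n a y')" by blast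
    show "Poly_Mapping.lookup (csmult (c s') s') (ex n a y) = (if s' = s then c s' else 0)"
      unfolding s' sy lookup_csmult_mono mono_inj by simp
  qed
  also have "\<dots> = (if s \<in> ?S then c s else 0)"
    by (rule sum.delta[OF finite_imageI[OF finite_Y]])
  also have "\<dots> = c s" using s by (rule if_P)
  finally have l1: "Poly_Mapping.lookup (\<Sum>s\<in>?S. csmult (c s) s) (ex n a y) = c s" .
  have "ex n a y \<notin> Poly_Mapping.keys (\<Sum>g\<in>F. f g * g)"
  proof
    assume "ex n a y \<in> Poly_Mapping.keys (\<Sum>g\<in>F. f g * g)"
    hence "ex n a y \<in> (\<Union>g\<in>F. Poly_Mapping.keys (f g * g))" using keys_sum[of "\<lambda>g. f g * g" F] by blast
    then obtain g where gF: "g \<in> F" and kg: "ex n a y \<in> Poly_Mapping.keys (f g * g)" by blast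
    have gJ: "g \<in> JH_gens n a" using gF F(2) by blast
    obtain e where ge: "g = mono e" and nd: "\<forall>k. ex n a y \<noteq> k + e"
      using not_div[OF y sym diag gJ] by blast
    have kge: "Poly_Mapping.keys g = {e}" unfolding ge by (rule keys_mono)
    have "ex n a y \<in> {u + v |u v. u \<in> Poly_Mapping.keys (f g) \<and> v \<in> Poly_Mapping.keys g}"
      using kg keys_mult[of "f g" g] by blast
    then obtain u v where uv: "ex n a y = u + v" "v \<in> Poly_Mapping.keys g" by blast
    have "v = e" using uv(2) kge by simp
    thus False using uv(1) nd by simp
  qed
  hence "Poly_Mapping.lookup (\<Sum>g\<in>F. f g * g) (ex n a y) = 0" by (simp add: in_keys_iff)
  moreover from l1 have "Poly_Mapping.lookup (\<Sum>g\<in>F. f g * g) (ex n a y) = c s" unfolding eq .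
  ultimately show "c s = 0" by simp
qed

lemma card_S: "card ((\<lambda>y. mono (ex n a y) :: 'k::field mpoly) ` Y n a) = card (Y n a)"
proof (rule card_image)
  show "inj_on (\<lambda>y. mono (ex n a y) :: 'k::field mpoly) (Y n a)"
    using ex_inj unfolding inj_on_def mono_inj by blast
qed

lemma S_Rn: "(\<lambda>y. mono (ex n a y) :: 'k::field mpoly) ` Y n a \<subseteq> Rn n"
proof
  fix s assume "s \<in> (\<lambda>y. mono (ex n a y) :: 'k::field mpoly) ` Y n a"
  then obtain y where s: "s = mono (ex n a y)" by blast
  have "Poly_Mapping.keys (ex n a y) \<subseteq> {..<n}"
  proof
    fix p assume "p \<in> Poly_Mapping.keys (ex n a y)"
    hence "Poly_Mapping.lookup (ex n a y) p \<noteq> 0" by (simp add: in_keys_iff)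
    thus "p \<in> {..<n}" unfolding lookup_ex by (auto split: if_splits)
  qed
  moreover have "Poly_Mapping.keys s = {ex n a y}" unfolding s by (rule keys_mono)
  ultimately show "s \<in> Rn n" unfolding Rn_def by simp
qed

theorem theorem2:
  fixes n :: nat and a :: "nat \<Rightarrow> nat \<Rightarrow> nat"
  assumes "n \<ge> 1"
    and sym: "\<forall>i<n. \<forall>j<n. a i j = a j i"
    and "psd n a"
    and diag: "\<forall>i<n. \<forall>j<n. j \<noteq> i \<longrightarrow> a i j \<le> a i i"
  shows "enat (nat (det (mat n n (\<lambda>(i, j). int (a i j)))))
           \<le> quot_dim (Rn n) (ideal_gen (Rn n) (JH_gens n a :: 'k::field mpoly set))"
proof -
  let ?S = "(\<lambda>y. mono (ex n a y) :: 'k mpoly) ` Y n a"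
  have mi: "0 \<le> det (Mb n a) \<and> det (Mb n a) \<le> int (card (Y n a))"
    by (rule main_ineq) (use sym diag assms(3) in \<open>auto simp: symc_def diagc_def\<close>)
  hence "nat (det (mat n n (\<lambda>(i, j). int (a i j)))) \<le> card ?S"
    unfolding card_S Mb_def[symmetric] by linarith
  hence "enat (nat (det (mat n n (\<lambda>(i, j). int (a i j))))) \<le> enat (card ?S)" by simp
  also have "\<dots> \<le> quot_dim (Rn n) (ideal_gen (Rn n) (JH_gens n a :: 'k::field mpoly set))"
    unfolding quot_dim_def
  proof (rule SUP_upper)
    show "?S \<in> {S. finite S \<and> S \<subseteq> Rn n \<and> lin_indep_mod (ideal_gen (Rn n) (JH_gens n a :: 'k::field mpoly set)) S}"
      unfolding mem_Collect_eq by (intro conjI finite_imageI finite_Y S_Rn lin_indep[OF sym diag])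
  qed
  finally show ?thesis .
qed


end
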